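(* For every $n>8$, if $\Delta,\Delta'\in\mathcal{P}_n$ form a special pair for rule $160$, then $lab_\Delta$ and $lab_{\Delta'}$ differ on exactly one arc among the $2n$ arcs $(i,i+1)$, $(i+1,i)$, $i\in\mathbb{Z}_n$.
   Context: Cells are indexed by $\mathbb{Z}_n=\{0,\dots,n-1\}$, indices modulo $n$. Rule $160$ has local rule $r_{160}(x_1,x_2,x_3)=x_1\wedge x_3$ and global function $f_{160,n}(x)_i=r_{160}(x_{i-1},x_i,x_{i+1})$. An update schedule is an ordered partition $\Delta=(\Delta_1,\dots,\Delta_k)$ of $\mathbb{Z}_n$ into nonempty blocks; $\mathcal{P}_n$ is the set of them. For a block $B$ let $f^{(B)}(x)_i=f_{160,n}(x)_i$ if $i\in B$ and $x_i$ otherwise; $f^{(\Delta)}_{160,n}=f^{(\Delta_k)}\circ\cdots\circ f^{(\Delta_1)}$. For $u,v\in\mathbb{Z}_n$ with $u\in\Delta_a$, $v\in\Delta_b$, $lab_\Delta((u,v))=\oplus$ if $b\le a$ and $\ominus$ if $a<b$. $\Delta\equiv\Delta'$ iff $lab_\Delta$ and $lab_{\Delta'}$ agree on every arc $(i,i+1)$ and $(i+1,i)$. A pair $\Delta,\Delta'$ is special for rule $160$ if $\Delta\not\equiv\Delta'$ but $f^{(\Delta)}_{160,n}=f^{(\Delta')}_{160,n}$. *)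

theory Defs
  imports Main
begin

text \<open>Configurations are maps nat => bool; only cells 0..n-1 are meaningful
 (cells outside are never updated). Indices are taken modulo n.\<close>

definition r160 :: "bool \<Rightarrow> bool \<Rightarrow> bool \<Rightarrow> bool" where
  "r160 x1 x2 x3 = (x1 \<and> x3)"

definition f160 :: "nat \<Rightarrow> (nat \<Rightarrow> bool) \<Rightarrow> (nat \<Rightarrow> bool)" where
  "f160 n x i = r160 (x ((i + n - 1) mod n)) (x i) (x ((i + 1) mod n))"

definition is_schedule :: "nat \<Rightarrow> nat set list \<Rightarrow> bool" where
  "is_schedule n D \<longleftrightarrow>
     (\<forall>B\<in>set D. B \<noteq> {}) \<and>
     (\<forall>a<length D. \<forall>b<length D. a \<noteq> b \<longrightarrow> D ! a \<inter> D ! b = {}) \<and>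
     \<Union>(set D) = {0..<n}"

definition block_update :: "nat \<Rightarrow> nat set \<Rightarrow> (nat \<Rightarrow> bool) \<Rightarrow> (nat \<Rightarrow> bool)" where
  "block_update n B x i = (if i \<in> B then f160 n x i else x i)"

text \<open>f^(D) = f^(D_k) o ... o f^(D_1): fold applies D_1 first.\<close>
definition sched_fun :: "nat \<Rightarrow> nat set list \<Rightarrow> (nat \<Rightarrow> bool) \<Rightarrow> (nat \<Rightarrow> bool)" where
  "sched_fun n D = fold (block_update n) D"

definition block_idx :: "nat set list \<Rightarrow> nat \<Rightarrow> nat" where
  "block_idx D u = (THE a. a < length D \<and> u \<in> D ! a)"

text \<open>Label of arc (u,v): True means \<oplus> (b \<le> a), False means \<ominus> (a < b).\<close>
definition lab :: "nat set list \<Rightarrow> nat \<times> nat \<Rightarrow> bool" where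
  "lab D uv = (block_idx D (snd uv) \<le> block_idx D (fst uv))"

definition arcs :: "nat \<Rightarrow> (nat \<times> nat) set" where
  "arcs n = {(i, (i + 1) mod n) | i. i < n} \<union> {((i + 1) mod n, i) | i. i < n}"

definition sched_equiv :: "nat \<Rightarrow> nat set list \<Rightarrow> nat set list \<Rightarrow> bool" where
  "sched_equiv n D D' \<longleftrightarrow> (\<forall>e\<in>arcs n. lab D e = lab D' e)"

definition special_pair :: "nat \<Rightarrow> nat set list \<Rightarrow> nat set list \<Rightarrow> bool" where
  "special_pair n D D' \<longleftrightarrow> \<not> sched_equiv n D D' \<and> sched_fun n D = sched_fun n D'"

end

theory Submission
  imports Defs
begin


definition prv :: "nat \<Rightarrow> nat \<Rightarrow> nat" where "prv n c = (c + n - 1) mod n"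
definition nxt :: "nat \<Rightarrow> nat \<Rightarrow> nat" where "nxt n c = (c + 1) mod n"

lemma prv_cases: "c < n \<Longrightarrow> prv n c = (if c = 0 then n - 1 else c - 1)"
proof -
  assume c: "c < n"
  show ?thesis
  proof (cases "c = 0")
    case True then show ?thesis using c by (simp add: prv_def)
  next
    case False
    then obtain c' where c': "c = Suc c'" by (cases c) auto
    then have "c + n - 1 = c' + n" by simp
    then show ?thesis using c' c by (simp add: prv_def)
  qed
qed

lemma nxt_cases: "c < n \<Longrightarrow> nxt n c = (if c = n - 1 then 0 else c + 1)"
  by (auto simp: nxt_def)

lemma prv_lt: "c < n \<Longrightarrow> prv n c < n" by (auto simp: prv_cases)
lemma nxt_lt: "c < n \<Longrightarrow> nxt n c < n" by (auto simp: nxt_cases)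
lemma nxt_prv: "c < n \<Longrightarrow> nxt n (prv n c) = c"
  by (auto simp: prv_cases nxt_cases prv_lt)
lemma prv_nxt: "c < n \<Longrightarrow> prv n (nxt n c) = c"
  by (auto simp: prv_cases nxt_cases nxt_lt)

lemma prv_pow_lt: "c < n \<Longrightarrow> (prv n ^^ k) c < n"
  by (induction k) (auto simp: prv_lt)
lemma nxt_pow_lt: "c < n \<Longrightarrow> (nxt n ^^ k) c < n"
  by (induction k) (auto simp: nxt_lt)

lemma nxt_pow: "c < n \<Longrightarrow> (nxt n ^^ k) c = (c + k) mod n"
proof (induction k)
  case 0 then show ?case by simp
next
  case (Suc k) then show ?case by (simp add: nxt_def mod_Suc_eq)
qed

lemma prv_pow: "c < n \<Longrightarrow> (prv n ^^ k) c = (c + k * (n - 1)) mod n"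
proof (induction k)
  case 0 then show ?case by simp
next
  case (Suc k)
  have "(prv n ^^ Suc k) c = prv n ((c + k * (n - 1)) mod n)"
    using Suc by simp
  also have "\<dots> = ((c + k * (n - 1)) mod n + (n - 1)) mod n"
    using Suc.prems by (simp add: prv_def)
  also have "\<dots> = (c + k * (n - 1) + (n - 1)) mod n" by (simp add: mod_add_left_eq)
  also have "c + k * (n - 1) + (n - 1) = c + Suc k * (n - 1)"
    by (metis add.assoc add.commute mult_Suc)
  finally show ?case by simp
qed

lemma prv_pow_n: "c < n \<Longrightarrow> (prv n ^^ n) c = c"
proof -
  assume c: "c < n"
  have "c + n * (n - 1) = c + (n - 1) * n" by simp
  then show ?thesis using c by (simp add: prv_pow)
qed

lemma prv_pow_n1: "c < n \<Longrightarrow> (prv n ^^ (n - 1)) c = nxt n c"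
proof -
  assume c: "c < n"
  then have n: "n = Suc (n - 1)" by simp
  have "prv n ((prv n ^^ (n - 1)) c) = c" using prv_pow_n[OF c]
    by (metis funpow.simps(2) n o_apply)
  then have "nxt n (prv n ((prv n ^^ (n - 1)) c)) = nxt n c" by simp
  then show ?thesis using nxt_prv[OF prv_pow_lt[OF c]] by simp
qed

lemma nxt_pow_n1: "c < n \<Longrightarrow> (nxt n ^^ (n - 1)) c = prv n c"
  by (simp add: nxt_pow prv_def)

definition AA :: "nat \<Rightarrow> nat set list \<Rightarrow> nat \<Rightarrow> bool" where
  "AA n D c \<longleftrightarrow> block_idx D (prv n c) < block_idx D c"
definition BB :: "nat \<Rightarrow> nat set list \<Rightarrow> nat \<Rightarrow> bool" where
  "BB n D c \<longleftrightarrow> block_idx D (nxt n c) < block_idx D c"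
definition mm :: "nat \<Rightarrow> nat set list \<Rightarrow> nat \<Rightarrow> nat" where
  "mm n D c = (LEAST k. \<not> AA n D ((prv n ^^ k) c))"
definition pp :: "nat \<Rightarrow> nat set list \<Rightarrow> nat \<Rightarrow> nat" where
  "pp n D c = (LEAST k. \<not> BB n D ((nxt n ^^ k) c))"

lemma chainA: "(\<forall>j<k. AA n D ((prv n ^^ j) c)) \<Longrightarrow> block_idx D ((prv n ^^ k) c) + k \<le> block_idx D c"
proof (induction k)
  case 0 then show ?case by simp
next
  case (Suc k)
  then have "block_idx D ((prv n ^^ k) c) + k \<le> block_idx D c" by simp
  moreover have "AA n D ((prv n ^^ k) c)" using Suc.prems by simp
  ultimately show ?case by (simp add: AA_def)
qed

lemma chainB: "(\<forall>j<k. BB n D ((nxt n ^^ j) c)) \<Longrightarrow> block_idx D ((nxt n ^^ k) c) + k \<le> block_idx D c"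
proof (induction k)
  case 0 then show ?case by simp
next
  case (Suc k)
  then have "block_idx D ((nxt n ^^ k) c) + k \<le> block_idx D c" by simp
  moreover have "BB n D ((nxt n ^^ k) c)" using Suc.prems by simp
  ultimately show ?case by (simp add: BB_def)
qed

lemma mm_ex: assumes "c < n" shows "\<exists>k<n. \<not> AA n D ((prv n ^^ k) c)"
proof (rule ccontr)
  assume "\<not> ?thesis"
  then have "\<forall>j<n. AA n D ((prv n ^^ j) c)" by blast
  from chainA[OF this] show False using prv_pow_n[OF assms] assms by simp
qed

lemma pp_ex: assumes "c < n" shows "\<exists>k<n. \<not> BB n D ((nxt n ^^ k) c)"
proof (rule ccontr)
  assume "\<not> ?thesis"
  then have "\<forall>j<n. BB n D ((nxt n ^^ j) c)" by blast
  from chainB[OF this] show False using nxt_pow[OF assms, of n] assms by simp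
qed

lemma mm_lt: "c < n \<Longrightarrow> mm n D c < n"
  unfolding mm_def by (meson mm_ex Least_le le_less_trans)
lemma pp_lt: "c < n \<Longrightarrow> pp n D c < n"
  unfolding pp_def by (meson pp_ex Least_le le_less_trans)

lemma mm_chain: "j < mm n D c \<Longrightarrow> AA n D ((prv n ^^ j) c)"
  unfolding mm_def using not_less_Least by blast
lemma pp_chain: "j < pp n D c \<Longrightarrow> BB n D ((nxt n ^^ j) c)"
  unfolding pp_def using not_less_Least by blast

lemma K1: assumes "c < n" shows "mm n D c = (if AA n D c then Suc (mm n D (prv n c)) else 0)"
proof (cases "AA n D c")
  case True
  obtain k where k: "\<not> AA n D ((prv n ^^ k) c)" using mm_ex[OF assms] by blast
  have "mm n D c = Suc (LEAST k. \<not> AA n D ((prv n ^^ Suc k) c))"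
    unfolding mm_def by (rule Least_Suc[of "\<lambda>k. \<not> AA n D ((prv n ^^ k) c)", OF k]) (simp add: True)
  also have "\<dots> = Suc (mm n D (prv n c))" unfolding mm_def funpow_Suc_right by simp
  finally show ?thesis using True by simp
next
  case False
  have "(LEAST k. \<not> AA n D ((prv n ^^ k) c)) = 0" by (rule Least_eq_0) (simp add: False)
  then show ?thesis using False unfolding mm_def by simp
qed

lemma K2: assumes "c < n" shows "pp n D c = (if BB n D c then Suc (pp n D (nxt n c)) else 0)"
proof (cases "BB n D c")
  case True
  obtain k where k: "\<not> BB n D ((nxt n ^^ k) c)" using pp_ex[OF assms] by blast
  have "pp n D c = Suc (LEAST k. \<not> BB n D ((nxt n ^^ Suc k) c))"
    unfolding pp_def by (rule Least_Suc[of "\<lambda>k. \<not> BB n D ((nxt n ^^ k) c)", OF k]) (simp add: True)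
  also have "\<dots> = Suc (pp n D (nxt n c))" unfolding pp_def funpow_Suc_right by simp
  finally show ?thesis using True by simp
next
  case False
  have "(LEAST k. \<not> BB n D ((nxt n ^^ k) c)) = 0" by (rule Least_eq_0) (simp add: False)
  then show ?thesis using False unfolding pp_def by simp
qed

lemma K3: "c < n \<Longrightarrow> \<not> (AA n D (nxt n c) \<and> BB n D c)"
  by (auto simp: AA_def BB_def prv_nxt)

lemma K5: assumes "c < n" "1 < n" "\<not> AA n D c" shows "pp n D c \<le> n - 2"
proof (rule ccontr)
  assume "\<not> ?thesis"
  then have "n - 1 \<le> pp n D c" by simp
  then have "\<forall>j<n-1. BB n D ((nxt n ^^ j) c)" using pp_chain by (meson less_le_trans)
  from chainB[OF this] have "block_idx D (prv n c) < block_idx D c"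
    using nxt_pow_n1[OF assms(1)] assms(2) by simp
  then show False using assms(3) by (simp add: AA_def)
qed

lemma K5m: assumes "c < n" "1 < n" "\<not> BB n D c" shows "mm n D c \<le> n - 2"
proof (rule ccontr)
  assume "\<not> ?thesis"
  then have "n - 1 \<le> mm n D c" by simp
  then have "\<forall>j<n-1. AA n D ((prv n ^^ j) c)" using mm_chain by (meson less_le_trans)
  from chainA[OF this] have "block_idx D (nxt n c) < block_idx D c"
    using prv_pow_n1[OF assms(1)] assms(2) by simp
  then show False using assms(3) by (simp add: BB_def)
qed



lemma sched_blk: assumes S: "is_schedule n D" and c: "c < n"
  shows "block_idx D c < length D \<and> c \<in> D ! block_idx D c"
proof -
  have "c \<in> \<Union>(set D)" using S c by (simp add: is_schedule_def)
  then obtain a where a: "a < length D" "c \<in> D ! a" by (auto simp: in_set_conv_nth)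
  have disj: "D ! a' \<inter> D ! b' = {}" if "a' < length D" "b' < length D" "a' \<noteq> b'" for a' b'
    using S that unfolding is_schedule_def by simp
  have u: "b = a" if "b < length D \<and> c \<in> D ! b" for b
  proof (rule ccontr)
    assume "b \<noteq> a"
    then have "D ! b \<inter> D ! a = {}" using disj that a by simp
    then show False using that a by blast
  qed
  have "block_idx D c = a" unfolding block_idx_def
  proof (rule the_equality)
    show "a < length D \<and> c \<in> D ! a" using a by simp
    fix b assume "b < length D \<and> c \<in> D ! b" then show "b = a" by (rule u)
  qed
  then show ?thesis using a by simp
qed

lemma sched_uniq: assumes S: "is_schedule n D" and "a < length D" "c \<in> D ! a"
  shows "block_idx D c = a"
proof -
  have disj: "D ! a' \<inter> D ! b' = {}" if "a' < length D" "b' < length D" "a' \<noteq> b'" for a' b'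
    using S that unfolding is_schedule_def by simp
  have u: "b = a" if "b < length D \<and> c \<in> D ! b" for b
  proof (rule ccontr)
    assume "b \<noteq> a"
    then have "D ! b \<inter> D ! a = {}" using disj that assms by simp
    then show False using that assms by blast
  qed
  show ?thesis unfolding block_idx_def
  proof (rule the_equality)
    show "a < length D \<and> c \<in> D ! a" using assms by simp
    fix b assume "b < length D \<and> c \<in> D ! b" then show "b = a" by (rule u)
  qed
qed

lemma bu_notin: "c \<notin> B \<Longrightarrow> block_update n B y c = y c"
  by (simp add: block_update_def)
lemma bu_in: "c \<in> B \<Longrightarrow> block_update n B y c = f160 n y c"
  by (simp add: block_update_def)

lemma G_Suc: "t < length D \<Longrightarrow> fold f (take (Suc t) D) x = f (D ! t) (fold f (take t D) x)"
  by (simp add: take_Suc_conv_app_nth)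

lemma G1: assumes S: "is_schedule n D" and c: "c < n"
  shows "t \<le> block_idx D c \<Longrightarrow> fold (block_update n) (take t D) x c = x c"
proof (induction t)
  case 0 then show ?case by simp
next
  case (Suc t)
  have t: "t < length D" using Suc.prems sched_blk[OF S c] by simp
  have "c \<notin> D ! t" using sched_uniq[OF S t] Suc.prems by auto
  have "fold (block_update n) (take (Suc t) D) x c = block_update n (D ! t) (fold (block_update n) (take t D) x) c"
    by (simp only: G_Suc[OF t])
  then show ?case using Suc bu_notin[OF \<open>c \<notin> D ! t\<close>] by simp
qed

lemma G2: assumes S: "is_schedule n D" and c: "c < n"
  shows "block_idx D c < t \<Longrightarrow> t \<le> length D \<Longrightarrow>
    fold (block_update n) (take t D) x c = fold (block_update n) (take (Suc (block_idx D c)) D) x c"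
proof (induction t)
  case 0 then show ?case by simp
next
  case (Suc t)
  show ?case
  proof (cases "t = block_idx D c")
    case True then show ?thesis by simp
  next
    case False
    have t: "t < length D" using Suc.prems by simp
    have "c \<notin> D ! t" using sched_uniq[OF S t] False by auto
    have "fold (block_update n) (take (Suc t) D) x c = block_update n (D ! t) (fold (block_update n) (take t D) x) c"
      by (simp only: G_Suc[OF t])
    then show ?thesis using Suc False bu_notin[OF \<open>c \<notin> D ! t\<close>] by simp
  qed
qed

lemma sched_rec: assumes S: "is_schedule n D" and c: "c < n"
  shows "sched_fun n D x c =
    ((if AA n D c then sched_fun n D x (prv n c) else x (prv n c)) \<and>
     (if BB n D c then sched_fun n D x (nxt n c) else x (nxt n c)))"
proof -
  define G where "G t = fold (block_update n) (take t D) x" for t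
  have F: "sched_fun n D x e = G (Suc (block_idx D e)) e" if e: "e < n" for e
  proof -
    have "sched_fun n D x e = G (length D) e" by (simp add: sched_fun_def G_def)
    also have "\<dots> = G (Suc (block_idx D e)) e" unfolding G_def
      by (rule G2[OF S e]) (use sched_blk[OF S e] in auto)
    finally show ?thesis .
  qed
  have bc: "block_idx D c < length D" "c \<in> D ! block_idx D c" using sched_blk[OF S c] by auto
  have "G (Suc (block_idx D c)) c = f160 n (G (block_idx D c)) c"
    unfolding G_def G_Suc[OF bc(1)] using bu_in[OF bc(2)] by simp
  also have "\<dots> = (G (block_idx D c) (prv n c) \<and> G (block_idx D c) (nxt n c))"
    by (simp add: f160_def r160_def prv_def nxt_def)
  finally have 1: "sched_fun n D x c = (G (block_idx D c) (prv n c) \<and> G (block_idx D c) (nxt n c))"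
    using F[OF c] by simp
  have pl: "prv n c < n" "nxt n c < n" using c by (auto simp: prv_lt nxt_lt)
  have 2: "G (block_idx D c) e = (if block_idx D e < block_idx D c then sched_fun n D x e else x e)"
    if e: "e < n" for e
  proof (cases "block_idx D e < block_idx D c")
    case True
    then have "G (block_idx D c) e = G (Suc (block_idx D e)) e" unfolding G_def
      by (intro G2[OF S e]) (use bc in auto)
    then show ?thesis using True F[OF e] by simp
  next
    case False
    then show ?thesis unfolding G_def using G1[OF S e] by simp
  qed
  show ?thesis using 1 2[OF pl(1)] 2[OF pl(2)] by (simp add: AA_def BB_def)
qed




definition MemL :: "nat \<Rightarrow> nat \<Rightarrow> nat \<Rightarrow> bool" where
  "MemL n m d \<longleftrightarrow> (d = 0 \<and> 0 < m) \<or> n < m + d \<or> n = m + 1 + d"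
definition MemR :: "nat \<Rightarrow> nat \<Rightarrow> nat \<Rightarrow> bool" where
  "MemR n p d \<longleftrightarrow> d < p \<or> d = p + 1 \<or> (d = 0 \<and> n = p + 1)"
definition Mem :: "nat \<Rightarrow> nat \<Rightarrow> nat \<Rightarrow> nat \<Rightarrow> bool" where
  "Mem n m p d \<longleftrightarrow> MemL n m d \<or> MemR n p d"

definition off :: "nat \<Rightarrow> nat \<Rightarrow> nat \<Rightarrow> nat" where "off n j c = (j + n - c) mod n"

lemma off_le: "c \<le> j \<Longrightarrow> j < n \<Longrightarrow> off n j c = j - c"
proof -
  assume a: "c \<le> j" "j < n"
  then obtain e where e: "j = c + e" using le_Suc_ex by blast
  then have "j + n - c = e + n" by simp
  then show ?thesis using a e by (simp add: off_def)
qed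

lemma off_gt: "j < c \<Longrightarrow> c < n \<Longrightarrow> off n j c = j + n - c"
  by (simp add: off_def)

lemma off_lt: "0 < n \<Longrightarrow> off n j c < n" by (simp add: off_def)

lemma off_zero: "j < n \<Longrightarrow> c < n \<Longrightarrow> (off n j c = 0) = (c = j)"
proof (cases "c \<le> j")
  case True
  assume "j < n" "c < n"
  then show ?thesis using True off_le[OF True] by auto
next
  case False
  assume a: "j < n" "c < n"
  then have "off n j c = j + n - c" using False off_gt by simp
  then show ?thesis using False a by simp
qed

lemma off_prv: assumes j: "j < n" and c: "c < n"
  shows "off n j (prv n c) = (if off n j c = n - 1 then 0 else Suc (off n j c))"
proof (cases "c = 0")
  case True
  then have p: "prv n c = n - 1" using c by (simp add: prv_cases)
  show ?thesis
  proof (cases "j = n - 1")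
    case True
    then show ?thesis using p off_le[of "n-1" j n] off_le[of c j n] j \<open>c = 0\<close> by simp
  next
    case False
    then have "j < n - 1" using j by simp
    then show ?thesis using p off_gt[of j "n-1" n] off_le[of c j n] j c \<open>c = 0\<close> by simp
  qed
next
  case False
  then have p: "prv n c = c - 1" using c by (simp add: prv_cases)
  show ?thesis
  proof (cases "c \<le> j")
    case True
    then show ?thesis using p off_le[of "c-1" j n] off_le[of c j n] j c False by (simp add: Suc_diff_le)
  next
    case nle: False
    show ?thesis
    proof (cases "c - 1 = j")
      case True
      then show ?thesis using p off_le[of "c-1" j n] off_gt[of j c n] j c False nle by simp
    next
      case ne: False
      then have "j < c - 1" using nle by simp
      then show ?thesis using p off_gt[of j "c-1" n] off_gt[of j c n] j c False nle by (simp add: Suc_diff_le)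
    qed
  qed
qed

lemma off_nxt: assumes j: "j < n" and c: "c < n"
  shows "off n j (nxt n c) = (if off n j c = 0 then n - 1 else off n j c - 1)"
proof -
  have nc: "nxt n c < n" using nxt_lt[OF c] .
  have "off n j (prv n (nxt n c)) = (if off n j (nxt n c) = n - 1 then 0 else Suc (off n j (nxt n c)))"
    using off_prv[OF j nc] .
  then have e: "off n j c = (if off n j (nxt n c) = n - 1 then 0 else Suc (off n j (nxt n c)))"
    using prv_nxt[OF c] by simp
  have "off n j (nxt n c) < n" using off_lt c by simp
  then show ?thesis using e by auto
qed

lemma arL0: "j < n \<Longrightarrow> c < n \<Longrightarrow> (prv n c = j) = MemL n 0 (off n j c)"
proof -
  assume j: "j < n" and c: "c < n"
  have "(prv n c = j) = (off n j (prv n c) = 0)" using off_zero[OF j prv_lt[OF c]] by simp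
  also have "\<dots> = (off n j c = n - 1)" using off_prv[OF j c] by simp
  also have "\<dots> = MemL n 0 (off n j c)" using off_lt[of n j c] c unfolding MemL_def by auto
  finally show ?thesis .
qed

lemma arR0: "1 < n \<Longrightarrow> j < n \<Longrightarrow> c < n \<Longrightarrow> (nxt n c = j) = MemR n 0 (off n j c)"
proof -
  assume n: "1 < n" and j: "j < n" and c: "c < n"
  have "(nxt n c = j) = (off n j (nxt n c) = 0)" using off_zero[OF j nxt_lt[OF c]] by simp
  also have "\<dots> = (off n j c = 1)" using off_nxt[OF j c] n off_lt[of n j c] by auto
  also have "\<dots> = MemR n 0 (off n j c)" using n unfolding MemR_def by auto
  finally show ?thesis .
qed

lemma arL: assumes j: "j < n" and c: "c < n" and k: "Suc k < n"
  shows "MemL n (Suc k) (off n j c) = (MemL n k (off n j (prv n c)) \<or> c = j)"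
proof -
  define d where "d = off n j c"
  have d: "d < n" using off_lt c by (simp add: d_def)
  have z: "(c = j) = (d = 0)" using off_zero[OF j c] by (simp add: d_def)
  have p: "off n j (prv n c) = (if d = n - 1 then 0 else Suc d)" using off_prv[OF j c] by (simp add: d_def)
  show ?thesis
  proof (cases "d = n - 1")
    case True
    then show ?thesis using z p d k unfolding d_def[symmetric] MemL_def by auto
  next
    case False
    then show ?thesis using z p d k unfolding d_def[symmetric] MemL_def by auto
  qed
qed

lemma arR: assumes j: "j < n" and c: "c < n" and k: "Suc k < n"
  shows "MemR n (Suc k) (off n j c) = (MemR n k (off n j (nxt n c)) \<or> c = j)"
proof -
  define d where "d = off n j c"
  have d: "d < n" using off_lt c by (simp add: d_def)
  have z: "(c = j) = (d = 0)" using off_zero[OF j c] by (simp add: d_def)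
  have p: "off n j (nxt n c) = (if d = 0 then n - 1 else d - 1)" using off_nxt[OF j c] by (simp add: d_def)
  show ?thesis
  proof (cases "d = 0")
    case True
    then show ?thesis using z p d k unfolding d_def[symmetric] MemR_def by auto
  next
    case False
    then show ?thesis using z p d k unfolding d_def[symmetric] MemR_def by auto
  qed
qed

lemma ZL: assumes S: "is_schedule n D" and j: "j < n"
  shows "c < n \<Longrightarrow> (\<not> (if AA n D c then sched_fun n D (\<lambda>y. y \<noteq> j) (prv n c) else prv n c \<noteq> j))
     = MemL n (mm n D c) (off n j c)"
proof (induction "mm n D c" arbitrary: c)
  case 0
  then have "\<not> AA n D c" using K1[OF 0(2), of D] by (simp split: if_splits)
  then show ?case using arL0[OF j 0(2)] 0(1) by simp
next
  case (Suc k)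
  have c: "c < n" by fact
  have A: "AA n D c" and k: "mm n D (prv n c) = k"
    using K1[OF c, of D] Suc(2) by (simp_all split: if_splits)
  have pc: "prv n c < n" using prv_lt[OF c] .
  have nB: "\<not> BB n D (prv n c)" using K3[OF pc, of D] A nxt_prv[OF c] by simp
  have Fe: "sched_fun n D (\<lambda>y. y \<noteq> j) (prv n c) =
     ((if AA n D (prv n c) then sched_fun n D (\<lambda>y. y \<noteq> j) (prv n (prv n c)) else prv n (prv n c) \<noteq> j)
      \<and> c \<noteq> j)"
    using sched_rec[OF S pc, of "\<lambda>y. y \<noteq> j"] nB nxt_prv[OF c] by simp
  have sk: "Suc k < n" using mm_lt[OF c, of D] Suc(2) by simp
  have IH: "(\<not> (if AA n D (prv n c) then sched_fun n D (\<lambda>y. y \<noteq> j) (prv n (prv n c)) else prv n (prv n c) \<noteq> j))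
      = MemL n k (off n j (prv n c))" using Suc(1)[OF k[symmetric] pc] k by simp
  have ar: "MemL n (Suc k) (off n j c) = (MemL n k (off n j (prv n c)) \<or> c = j)" using arL[OF j c sk] .
  have mc: "mm n D c = Suc k" using Suc(2) by simp
  have e1: "(\<not> (if AA n D c then sched_fun n D (\<lambda>y. y \<noteq> j) (prv n c) else prv n c \<noteq> j))
      = (\<not> sched_fun n D (\<lambda>y. y \<noteq> j) (prv n c))" using A by (simp only: if_True)
  have e2: "(\<not> sched_fun n D (\<lambda>y. y \<noteq> j) (prv n c)) =
     ((\<not> (if AA n D (prv n c) then sched_fun n D (\<lambda>y. y \<noteq> j) (prv n (prv n c)) else prv n (prv n c) \<noteq> j)) \<or> c = j)"
    using Fe by blast
  show ?case by (simp only: e1 e2 IH ar mc)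
qed

lemma ZR: assumes S: "is_schedule n D" and j: "j < n" and n: "1 < n"
  shows "c < n \<Longrightarrow> (\<not> (if BB n D c then sched_fun n D (\<lambda>y. y \<noteq> j) (nxt n c) else nxt n c \<noteq> j))
     = MemR n (pp n D c) (off n j c)"
proof (induction "pp n D c" arbitrary: c)
  case 0
  then have "\<not> BB n D c" using K2[OF 0(2), of D] by (simp split: if_splits)
  then show ?case using arR0[OF n j 0(2)] 0(1) by simp
next
  case (Suc k)
  have c: "c < n" by fact
  have B: "BB n D c" and k: "pp n D (nxt n c) = k"
    using K2[OF c, of D] Suc(2) by (simp_all split: if_splits)
  have pc: "nxt n c < n" using nxt_lt[OF c] .
  have nA: "\<not> AA n D (nxt n c)" using K3[OF c, of D] B by simp
  have Fe: "sched_fun n D (\<lambda>y. y \<noteq> j) (nxt n c) =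
     (c \<noteq> j \<and> (if BB n D (nxt n c) then sched_fun n D (\<lambda>y. y \<noteq> j) (nxt n (nxt n c)) else nxt n (nxt n c) \<noteq> j))"
    using sched_rec[OF S pc, of "\<lambda>y. y \<noteq> j"] nA prv_nxt[OF c] by simp
  have sk: "Suc k < n" using pp_lt[OF c, of D] Suc(2) by simp
  have IH: "(\<not> (if BB n D (nxt n c) then sched_fun n D (\<lambda>y. y \<noteq> j) (nxt n (nxt n c)) else nxt n (nxt n c) \<noteq> j))
      = MemR n k (off n j (nxt n c))" using Suc(1)[OF k[symmetric] pc] k by simp
  have ar: "MemR n (Suc k) (off n j c) = (MemR n k (off n j (nxt n c)) \<or> c = j)" using arR[OF j c sk] .
  have mc: "pp n D c = Suc k" using Suc(2) by simp
  have e1: "(\<not> (if BB n D c then sched_fun n D (\<lambda>y. y \<noteq> j) (nxt n c) else nxt n c \<noteq> j))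
      = (\<not> sched_fun n D (\<lambda>y. y \<noteq> j) (nxt n c))" using B by (simp only: if_True)
  have e2: "(\<not> sched_fun n D (\<lambda>y. y \<noteq> j) (nxt n c)) =
     ((\<not> (if BB n D (nxt n c) then sched_fun n D (\<lambda>y. y \<noteq> j) (nxt n (nxt n c)) else nxt n (nxt n c) \<noteq> j)) \<or> c = j)"
    using Fe by blast
  show ?case by (simp only: e1 e2 IH ar mc)
qed

lemma Zchar: assumes S: "is_schedule n D" and j: "j < n" and n: "1 < n" and c: "c < n"
  shows "(\<not> sched_fun n D (\<lambda>y. y \<noteq> j) c) = Mem n (mm n D c) (pp n D c) (off n j c)"
proof -
  have r: "(\<not> sched_fun n D (\<lambda>y. y \<noteq> j) c) =
    ((\<not> (if AA n D c then sched_fun n D (\<lambda>y. y \<noteq> j) (prv n c) else prv n c \<noteq> j)) \<or>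
     (\<not> (if BB n D c then sched_fun n D (\<lambda>y. y \<noteq> j) (nxt n c) else nxt n c \<noteq> j)))"
    by (subst sched_rec[OF S c]) (rule de_Morgan_conj)
  show ?thesis unfolding Mem_def by (simp only: r ZL[OF S j c] ZR[OF S j n c])
qed

lemma off_choose: "c < n \<Longrightarrow> d < n \<Longrightarrow> off n ((c + d) mod n) c = d \<and> (c + d) mod n < n"
proof -
  assume a: "c < n" "d < n"
  show ?thesis
  proof (cases "c + d < n")
    case True then show ?thesis using a off_le[of c "c + d" n] by simp
  next
    case False
    then have e: "(c + d) mod n = c + d - n" using a by (simp add: mod_if)
    have "c + d - n < c" using a False by simp
    then show ?thesis using a False e off_gt[of "c + d - n" c n] by simp
  qed
qed

lemma E_sched: assumes S: "is_schedule n D" and S': "is_schedule n D'" and n: "1 < n"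
  and eq: "sched_fun n D = sched_fun n D'" and c: "c < n" and d: "d < n"
  shows "Mem n (mm n D c) (pp n D c) d = Mem n (mm n D' c) (pp n D' c) d"
proof -
  define j where "j = (c + d) mod n"
  have j: "j < n" "off n j c = d" using off_choose[OF c d] by (auto simp: j_def)
  show ?thesis using Zchar[OF S j(1) n c] Zchar[OF S' j(1) n c] eq j(2) by simp
qed

lemma MemP: "0 < d \<Longrightarrow> Mem n m p d = (n < m + d \<or> n = m + 1 + d \<or> d < p \<or> d = p + 1)"
  by (auto simp: Mem_def MemL_def MemR_def)

lemma Mem0: "m < n \<Longrightarrow> Mem n m p 0 = (0 < m \<or> 0 < p \<or> n = m + 1 \<or> n = p + 1)"
  by (auto simp: Mem_def MemL_def MemR_def)

lemma Mem_swap: "m < n \<Longrightarrow> p < n \<Longrightarrow> d < n \<Longrightarrow> Mem n p m d = Mem n m p ((n - d) mod n)"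
proof (cases "d = 0")
  case True
  assume "m < n" "p < n"
  then show ?thesis using True by (auto simp: Mem0)
next
  case False
  assume a: "m < n" "p < n" "d < n"
  then have "(n - d) mod n = n - d" "0 < n - d" using False by auto
  then show ?thesis using a False by (simp add: MemP) arith
qed

lemma uniq: assumes n: "n > 8" and "m < n" "p < n" "m' < n" "p' < n" and s: "m + p + 5 \<le> n"
  and E: "\<And>d. d < n \<Longrightarrow> Mem n m p d = Mem n m' p' d" shows "m = m' \<and> p = p'"
proof -
  have I: "(n < m + d \<or> n = m + 1 + d \<or> d < p \<or> d = p + 1) = (n < m' + d \<or> n = m' + 1 + d \<or> d < p' \<or> d = p' + 1)"
    if "0 < d" "d < n" for d using E[of d] that by (simp add: MemP)
  have i1: "n < m' + (p+1) \<or> n = m' + 1 + (p+1) \<or> p+1 < p' \<or> p+1 = p' + 1"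
    using I[of "p+1"] s by simp
  have i2: "\<not> (n < m' + (p+2) \<or> n = m' + 1 + (p+2) \<or> p+2 < p' \<or> p+2 = p' + 1)"
    using I[of "p+2"] s by simp
  have i3: "\<not> (n < m' + (p+3) \<or> n = m' + 1 + (p+3) \<or> p+3 < p' \<or> p+3 = p' + 1)"
    using I[of "p+3"] s by simp
  from i2 have c2: "m' + p + 2 \<le> n" "n \<noteq> m' + p + 3" "p' \<le> p + 2" "p' \<noteq> p + 1" by auto
  from i3 have c3: "m' + p + 3 \<le> n" "p' \<noteq> p + 2" by auto
  from i1 c2 c3 have pp: "p' = p" by auto
  have j1: "n < m' + (n-m-1) \<or> n = m' + 1 + (n-m-1) \<or> (n-m-1) < p' \<or> (n-m-1) = p' + 1"
    using I[of "n-m-1"] s by simp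
  have l2: "\<not> (n < m + (n-m-2) \<or> n = m + 1 + (n-m-2) \<or> (n-m-2) < p \<or> (n-m-2) = p + 1)"
    using s by arith
  have r2: "0 < n-m-2" "n-m-2 < n" using s by auto
  have j2: "\<not> (n < m' + (n-m-2) \<or> n = m' + 1 + (n-m-2) \<or> (n-m-2) < p' \<or> (n-m-2) = p' + 1)"
    using I[OF r2] l2 by blast
  have l3: "\<not> (n < m + (n-m-3) \<or> n = m + 1 + (n-m-3) \<or> (n-m-3) < p \<or> (n-m-3) = p + 1)"
    using s by arith
  have r3: "0 < n-m-3" "n-m-3 < n" using s by auto
  have j3: "\<not> (n < m' + (n-m-3) \<or> n = m' + 1 + (n-m-3) \<or> (n-m-3) < p' \<or> (n-m-3) = p' + 1)"
    using I[OF r3] l3 by blast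
  from j2 s have d2: "m' \<le> m + 2" "m' \<noteq> m + 1" by auto
  from j3 s have d3: "m' \<noteq> m + 2" by auto
  from j1 d2 d3 s pp have "m' = m" by auto
  with pp show ?thesis by simp
qed

lemma amb1: assumes n: "n > 8" and mn: "m < n" and pn: "p < n" and qn: "q \<le> n - 2" and m1: "m \<ge> 1"
  and E: "\<And>d. d < n \<Longrightarrow> Mem n m p d = Mem n 0 q d" shows "p = q \<and> n \<le> q + 4"
proof -
  define L where "L d \<longleftrightarrow> n < m + d \<or> n = m + 1 + d \<or> d < p \<or> d = p + 1" for d
  define R where "R d \<longleftrightarrow> d = n - 1 \<or> d < q \<or> d = q + 1" for d
  have I: "L d = R d" if "0 < d" "d < n" for d
  proof -
    have e: "(n < d) = False" "(n = Suc d) = (d = n - 1)" using that by auto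
    have "Mem n 0 q d = R d" using that by (simp add: MemP R_def e)
    then show ?thesis using E[OF that(2)] that by (simp add: MemP L_def)
  qed
  have "Mem n m p 0" using m1 mn by (simp add: Mem0)
  then have "Mem n 0 q 0" using E[of 0] n by simp
  then have q0: "0 < q" using n qn by (simp add: Mem0; arith)
  have "\<not> R q" using qn n by (simp add: R_def)
  then have "\<not> L q" using I[of q] q0 qn by simp
  then have f1: "p \<le> q" "m + q \<le> n" "m + q + 1 \<noteq> n" "q \<noteq> p + 1" unfolding L_def by auto
  have "R (n-1)" by (simp add: R_def)
  then have "L (n-1)" using I[of "n-1"] n by simp
  then have f2: "2 \<le> m \<or> p = n - 2" using f1 qn n m1 unfolding L_def by arith
  show ?thesis
  proof (cases "p = n - 2")
    case True then show ?thesis using f1 qn by simp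
  next
    case False
    then have m2: "2 \<le> m" and p2: "p < n - 2" using f2 f1 qn by auto
    have "L (n-2) = R (n-2)" using I[of "n-2"] n by simp
    then have f3: "(3 \<le> m \<or> p = n - 3) = (q = n - 3)" using m2 p2 qn n unfolding L_def R_def by arith
    have R4: "R (n-4) = (n - 4 < q \<or> q = n - 5)" using n qn unfolding R_def by arith
    have R5: "R (n-5) = (n - 5 < q \<or> q = n - 6)" using n qn unfolding R_def by arith
    have R6: "R (n-6) = (n - 6 < q \<or> q = n - 7)" using n qn unfolding R_def by arith
    have I4: "L (n-4) = R (n-4)" "L (n-5) = R (n-5)" "L (n-6) = R (n-6)" using I n by auto
    show ?thesis
    proof (cases "m = 2")
      case True
      have "L (n-3)" using True n unfolding L_def by simp
      then have "R (n-3)" using I[of "n-3"] n by simp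
      then have "q = n - 2 \<or> q = n - 4" using n qn unfolding R_def by arith
      then show ?thesis
      proof
        assume q: "q = n - 2"
        then have p4: "p \<le> n - 4" using f1 p2 by auto
        have "R (n-4)" "R (n-5)" using R4 R5 q n by (simp; arith)+
        then have "L (n-4)" "L (n-5)" using I4(1,2) by simp_all
        then have False using True n p4 unfolding L_def by arith
        then show ?thesis ..
      next
        assume q: "q = n - 4"
        then have pq: "p \<le> n - 4" "p \<noteq> n - 5" "p \<noteq> n - 3" using f1 f3 True n by auto
        have "R (n-5)" "R (n-6)" using R5 R6 q n by auto
        then have "L (n-5)" "L (n-6)" using I4 by auto
        then have "p = n - 4" using pq True n unfolding L_def by arith
        then show ?thesis using q by simp
      qed
    next
      case False
      then have q: "q = n - 3" using f3 m2 by auto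
      then have m3: "m = 3" using f1 m2 False n by auto
      have pq: "p \<le> n - 3" "p \<noteq> n - 4" using f1 q n by auto
      have "R (n-5)" "R (n-6)" using R5 R6 q n by auto
      then have "L (n-5)" "L (n-6)" using I4 by auto
      then have "p = n - 3" using pq m3 n unfolding L_def by arith
      then show ?thesis using q by simp
    qed
  qed
qed

lemma cl_nxt: "nxt n ((i + k) mod n) = (i + Suc k) mod n"
  by (simp add: nxt_def mod_Suc_eq)
lemma cl_prv: "0 < n \<Longrightarrow> prv n ((i + Suc k) mod n) = (i + k) mod n"
  by (metis cl_nxt mod_less_divisor prv_nxt)
lemma cl_last: "0 < n \<Longrightarrow> (i + (n - 1)) mod n = prv n i"
  by (simp add: prv_def)
lemma cl_all: "(i::nat) < n \<Longrightarrow> c < n \<Longrightarrow> (i + (c + n - i) mod n) mod n = c"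
proof -
  assume a: "i < n" "c < n"
  have "(i + (c + n - i) mod n) mod n = (i + (c + n - i)) mod n" by (rule mod_add_right_eq)
  also have "i + (c + n - i) = c + n" using a by simp
  finally show ?thesis using a by simp
qed

lemma core:
  fixes n i :: nat and A B A' B' :: "nat \<Rightarrow> bool" and m p m' p' :: "nat \<Rightarrow> nat"
  assumes n: "8 < n" and i: "i < n"
  and K1: "\<And>c. c < n \<Longrightarrow> m c = (if A c then Suc (m (prv n c)) else 0)"
  and K2: "\<And>c. c < n \<Longrightarrow> p c = (if B c then Suc (p (nxt n c)) else 0)"
  and K3: "\<And>c. c < n \<Longrightarrow> \<not> (A (nxt n c) \<and> B c)"
  and K4: "\<And>c. c < n \<Longrightarrow> m c < n \<and> p c < n"
  and K1': "\<And>c. c < n \<Longrightarrow> m' c = (if A' c then Suc (m' (prv n c)) else 0)"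
  and K2': "\<And>c. c < n \<Longrightarrow> p' c = (if B' c then Suc (p' (nxt n c)) else 0)"
  and K3': "\<And>c. c < n \<Longrightarrow> \<not> (A' (nxt n c) \<and> B' c)"
  and K4': "\<And>c. c < n \<Longrightarrow> m' c < n \<and> p' c < n"
  and K5': "\<And>c. c < n \<Longrightarrow> \<not> A' c \<Longrightarrow> p' c \<le> n - 2"
  and E: "\<And>c d. c < n \<Longrightarrow> d < n \<Longrightarrow> Mem n (m c) (p c) d = Mem n (m' c) (p' c) d"
  and Ai: "A i" and nAi: "\<not> A' i"
  shows "\<forall>c<n. (c \<noteq> i \<longrightarrow> A c = A' c) \<and> B c = B' c"
proof -
  have n0: "0 < n" using n by simp
  have m'i: "m' i = 0" using K1'[OF i] nAi by simp
  have mi: "1 \<le> m i" using K1[OF i] Ai by simp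
  have qq: "p i = p' i \<and> n \<le> p' i + 4"
    using amb1[OF n conjunct1[OF K4[OF i]] conjunct2[OF K4[OF i]] K5'[OF i nAi] mi] E[OF i] m'i by simp
  define q where "q = p i"
  have q: "p' i = q" "n \<le> q + 4" "q < n" using qq K4[OF i] by (auto simp: q_def)
  define cl where "cl k = (i + k) mod n" for k
  have cl_lt: "cl k < n" for k using n0 by (simp add: cl_def)
  have cl0: "cl 0 = i" using i by (simp add: cl_def)
  have clN: "nxt n (cl k) = cl (Suc k)" for k by (simp add: cl_def cl_nxt)
  have clP: "prv n (cl (Suc k)) = cl k" for k unfolding cl_def by (rule cl_prv[OF n0])
  have Bp: "\<And>c. c < n \<Longrightarrow> B c = (0 < p c)" using K2 by (metis less_numeral_extra(3) zero_less_Suc)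
  have Bp': "\<And>c. c < n \<Longrightarrow> B' c = (0 < p' c)" using K2' by (metis less_numeral_extra(3) zero_less_Suc)
  have Am: "\<And>c. c < n \<Longrightarrow> A c = (0 < m c)" using K1 by (metis less_numeral_extra(3) zero_less_Suc)
  have Am': "\<And>c. c < n \<Longrightarrow> A' c = (0 < m' c)" using K1' by (metis less_numeral_extra(3) zero_less_Suc)
  have chain: "k \<le> q \<Longrightarrow> p (cl k) = q - k \<and> p' (cl k) = q - k \<and> (0 < k \<longrightarrow> m (cl k) = 0 \<and> m' (cl k) = 0)" for k
  proof (induction k)
    case 0 then show ?case using cl0 q by (simp add: q_def)
  next
    case (Suc k)
    then have ih: "p (cl k) = q - k" "p' (cl k) = q - k" and kq: "k < q" by auto
    have b: "B (cl k)" "B' (cl k)" using ih kq Bp[OF cl_lt] Bp'[OF cl_lt] by auto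
    have "p (cl k) = Suc (p (cl (Suc k)))" "p' (cl k) = Suc (p' (cl (Suc k)))"
      using K2[OF cl_lt] K2'[OF cl_lt] b clN by auto
    moreover have "\<not> A (cl (Suc k))" "\<not> A' (cl (Suc k))"
      using K3[OF cl_lt[of k]] K3'[OF cl_lt[of k]] b clN by auto
    ultimately show ?case using ih K1[OF cl_lt] K1'[OF cl_lt] by auto
  qed
  have q1: "1 \<le> q" using q n by simp
  have pbound: "t \<le> n - 2 - q \<Longrightarrow> p (cl (n - 1 - t)) \<le> t" for t
  proof (induction t)
    case 0
    have "cl (n - 1) = prv n i" unfolding cl_def by (rule cl_last[OF n0])
    moreover have "nxt n (prv n i) = i" using nxt_prv[OF i] .
    ultimately have "\<not> B (cl (n - 1))" using K3[OF prv_lt[OF i]] Ai by auto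
    then show ?case using K2[OF cl_lt] by simp
  next
    case (Suc t)
    have e: "n - 1 - Suc t = Suc (n - 1 - Suc t) - 1" "Suc (n - 1 - Suc t) = n - 1 - t" using Suc.prems q by auto
    have "p (cl (n - 1 - Suc t)) \<le> Suc (p (nxt n (cl (n - 1 - Suc t))))"
      using K2[OF cl_lt] by simp
    also have "nxt n (cl (n - 1 - Suc t)) = cl (n - 1 - t)" using clN e by metis
    finally show ?case using Suc by simp
  qed
  have mbound: "q + t < n \<Longrightarrow> m (cl (q + t)) \<le> t" for t
  proof (induction t)
    case 0 then show ?case using chain[of q] q1 by simp
  next
    case (Suc t)
    have "m (cl (q + Suc t)) \<le> Suc (m (prv n (cl (Suc (q + t)))))"
      using K1[OF cl_lt] by simp
    then show ?case using Suc clP by simp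
  qed
  have rest: "m (cl k) = m' (cl k) \<and> p (cl k) = p' (cl k)" if k: "q < k" "k < n" for k
  proof -
    have "p (cl (n - 1 - (n - 1 - k))) \<le> n - 1 - k" by (rule pbound) (use k in simp)
    then have pb: "p (cl k) \<le> n - 1 - k" using k by simp
    have "m (cl (q + (k - q))) \<le> k - q" by (rule mbound) (use k in simp)
    then have mb: "m (cl k) \<le> k - q" using k by simp
    have "m (cl k) + p (cl k) + 5 \<le> n" using pb mb q k n by simp
    then show ?thesis using uniq[OF n conjunct1[OF K4[OF cl_lt]] conjunct2[OF K4[OF cl_lt]]
        conjunct1[OF K4'[OF cl_lt]] conjunct2[OF K4'[OF cl_lt]]] E[OF cl_lt] by blast
  qed
  show ?thesis
  proof (intro allI impI)
    fix c assume c: "c < n"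
    define k where "k = (c + n - i) mod n"
    have ck: "cl k = c" "k < n" using cl_all[OF i c] n0 by (auto simp: k_def cl_def)
    show "(c \<noteq> i \<longrightarrow> A c = A' c) \<and> B c = B' c"
    proof (cases "k = 0")
      case True
      then have "c = i" using ck cl0 by simp
      then show ?thesis using Bp[OF i] Bp'[OF i] q by (simp add: q_def)
    next
      case False
      have "m c = m' c \<and> p c = p' c"
      proof (cases "k \<le> q")
        case True then show ?thesis using chain[OF True] False ck by simp
      next
        case False then show ?thesis using rest[of k] ck by simp
      qed
      then show ?thesis using Am[OF c] Am'[OF c] Bp[OF c] Bp'[OF c] by simp
    qed
  qed
qed



definition rv :: "nat \<Rightarrow> nat \<Rightarrow> nat" where "rv n c = (n - c) mod n"

lemma rv_lt: "0 < n \<Longrightarrow> rv n c < n" by (simp add: rv_def)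
lemma rv_rv: "c < n \<Longrightarrow> rv n (rv n c) = c"
  by (cases "c = 0") (auto simp: rv_def)
lemma rv_prv: "c < n \<Longrightarrow> nxt n (rv n c) = rv n (prv n c)"
  by (cases "c = 0"; cases "c = 1") (auto simp: rv_def prv_cases nxt_cases)
lemma rv_nxt: "c < n \<Longrightarrow> prv n (rv n c) = rv n (nxt n c)"
  by (cases "c = 0"; cases "c = n - 1") (auto simp: rv_def prv_cases nxt_cases)

lemma core_sched:
  assumes n: "8 < n" and S1: "is_schedule n D1" and S2: "is_schedule n D2"
  and eq: "sched_fun n D1 = sched_fun n D2" and i: "i < n"
  and Ai: "AA n D1 i" and nAi: "\<not> AA n D2 i"
  shows "\<forall>c<n. (c \<noteq> i \<longrightarrow> AA n D1 c = AA n D2 c) \<and> BB n D1 c = BB n D2 c"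
proof (rule core[OF n i])
  show "\<And>c. c < n \<Longrightarrow> mm n D1 c = (if AA n D1 c then Suc (mm n D1 (prv n c)) else 0)" by (rule K1)
  show "\<And>c. c < n \<Longrightarrow> pp n D1 c = (if BB n D1 c then Suc (pp n D1 (nxt n c)) else 0)" by (rule K2)
  show "\<And>c. c < n \<Longrightarrow> \<not> (AA n D1 (nxt n c) \<and> BB n D1 c)" by (rule K3)
  show "\<And>c. c < n \<Longrightarrow> mm n D1 c < n \<and> pp n D1 c < n" by (simp add: mm_lt pp_lt)
  show "\<And>c. c < n \<Longrightarrow> mm n D2 c = (if AA n D2 c then Suc (mm n D2 (prv n c)) else 0)" by (rule K1)
  show "\<And>c. c < n \<Longrightarrow> pp n D2 c = (if BB n D2 c then Suc (pp n D2 (nxt n c)) else 0)" by (rule K2)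
  show "\<And>c. c < n \<Longrightarrow> \<not> (AA n D2 (nxt n c) \<and> BB n D2 c)" by (rule K3)
  show "\<And>c. c < n \<Longrightarrow> mm n D2 c < n \<and> pp n D2 c < n" by (simp add: mm_lt pp_lt)
  show "\<And>c. c < n \<Longrightarrow> \<not> AA n D2 c \<Longrightarrow> pp n D2 c \<le> n - 2" using K5 n by simp
  show "\<And>c d. c < n \<Longrightarrow> d < n \<Longrightarrow> Mem n (mm n D1 c) (pp n D1 c) d = Mem n (mm n D2 c) (pp n D2 c) d"
    using E_sched[OF S1 S2 _ eq] n by simp
qed (use Ai nAi in auto)

lemma core_sched_B:
  assumes n: "8 < n" and S1: "is_schedule n D1" and S2: "is_schedule n D2"
  and eq: "sched_fun n D1 = sched_fun n D2" and i: "i < n"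
  and Bi: "BB n D1 i" and nBi: "\<not> BB n D2 i"
  shows "\<forall>c<n. (c \<noteq> i \<longrightarrow> BB n D1 c = BB n D2 c) \<and> AA n D1 c = AA n D2 c"
proof -
  have n0: "0 < n" using n by simp
  let ?r = "rv n"
  have X: "\<forall>c<n. (c \<noteq> ?r i \<longrightarrow> BB n D1 (?r c) = BB n D2 (?r c)) \<and> AA n D1 (?r c) = AA n D2 (?r c)"
  proof (rule core[OF n rv_lt[OF n0],
        where A = "\<lambda>c. BB n D1 (?r c)" and B = "\<lambda>c. AA n D1 (?r c)"
          and m = "\<lambda>c. pp n D1 (?r c)" and p = "\<lambda>c. mm n D1 (?r c)"
          and A' = "\<lambda>c. BB n D2 (?r c)" and B' = "\<lambda>c. AA n D2 (?r c)"
          and m' = "\<lambda>c. pp n D2 (?r c)" and p' = "\<lambda>c. mm n D2 (?r c)"])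
    fix c assume c: "c < n"
    have rc: "?r c < n" using rv_lt[OF n0] .
    show "pp n D1 (?r c) = (if BB n D1 (?r c) then Suc (pp n D1 (?r (prv n c))) else 0)"
      using K2[OF rc, of D1] rv_prv[OF c] by simp
    show "mm n D1 (?r c) = (if AA n D1 (?r c) then Suc (mm n D1 (?r (nxt n c))) else 0)"
      using K1[OF rc, of D1] rv_nxt[OF c] by simp
    show "pp n D2 (?r c) = (if BB n D2 (?r c) then Suc (pp n D2 (?r (prv n c))) else 0)"
      using K2[OF rc, of D2] rv_prv[OF c] by simp
    show "mm n D2 (?r c) = (if AA n D2 (?r c) then Suc (mm n D2 (?r (nxt n c))) else 0)"
      using K1[OF rc, of D2] rv_nxt[OF c] by simp
    have e: "?r (nxt n c) = prv n (?r c)" using rv_nxt[OF c] by simp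
    have pr: "prv n (?r c) < n" using prv_lt[OF rc] .
    show "\<not> (BB n D1 (?r (nxt n c)) \<and> AA n D1 (?r c))"
      using K3[OF pr, of D1] nxt_prv[OF rc] e by auto
    show "\<not> (BB n D2 (?r (nxt n c)) \<and> AA n D2 (?r c))"
      using K3[OF pr, of D2] nxt_prv[OF rc] e by auto
    show "pp n D1 (?r c) < n \<and> mm n D1 (?r c) < n" using rc by (simp add: mm_lt pp_lt)
    show "pp n D2 (?r c) < n \<and> mm n D2 (?r c) < n" using rc by (simp add: mm_lt pp_lt)
    show "\<not> BB n D2 (?r c) \<Longrightarrow> mm n D2 (?r c) \<le> n - 2" using K5m[OF rc] n by simp
    fix d assume d: "d < n"
    have d': "(n - d) mod n < n" using n0 by simp
    have m1: "mm n D1 (?r c) < n" "pp n D1 (?r c) < n" "mm n D2 (?r c) < n" "pp n D2 (?r c) < n"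
      using rc by (simp_all add: mm_lt pp_lt)
    show "Mem n (pp n D1 (?r c)) (mm n D1 (?r c)) d = Mem n (pp n D2 (?r c)) (mm n D2 (?r c)) d"
      using Mem_swap[OF m1(1) m1(2) d] Mem_swap[OF m1(3) m1(4) d] E_sched[OF S1 S2 _ eq rc d'] n by simp
  next
    show "BB n D1 (?r (?r i))" using Bi rv_rv[OF i] by simp
    show "\<not> BB n D2 (?r (?r i))" using nBi rv_rv[OF i] by simp
  qed
  show ?thesis
  proof (intro allI impI)
    fix c assume c: "c < n"
    have "?r c < n" using rv_lt[OF n0] .
    moreover have "?r c \<noteq> ?r i" if "c \<noteq> i" using that rv_rv[OF c] rv_rv[OF i] by metis
    ultimately show "(c \<noteq> i \<longrightarrow> BB n D1 c = BB n D2 c) \<and> AA n D1 c = AA n D2 c"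
      using X rv_rv[OF c] by metis
  qed
qed

lemma lab_fwd: "k < n \<Longrightarrow> lab D (k, nxt n k) = (\<not> AA n D (nxt n k))"
  by (auto simp: lab_def AA_def prv_nxt)
lemma lab_bwd: "k < n \<Longrightarrow> lab D (nxt n k, k) = (\<not> BB n D k)"
  by (auto simp: lab_def BB_def)
lemma arcs_alt: "arcs n = {(k, nxt n k) | k. k < n} \<union> {(nxt n k, k) | k. k < n}"
  by (simp add: arcs_def nxt_def)



theorem mainTheorem20:
  fixes n :: nat and D D' :: "nat set list"
  assumes "n > 8"
    and "is_schedule n D" and "is_schedule n D'"
    and "special_pair n D D'"
  shows "card {e \<in> arcs n. lab D e \<noteq> lab D' e} = 1"
proof -
  have n: "8 < n" and S: "is_schedule n D" and S': "is_schedule n D'" using assms by auto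
  have ne: "\<not> sched_equiv n D D'" and eq: "sched_fun n D = sched_fun n D'"
    using assms(4) by (auto simp: special_pair_def)
  from ne obtain e where e: "e \<in> arcs n" "lab D e \<noteq> lab D' e" by (auto simp: sched_equiv_def)
  from e(1) obtain k where k: "k < n" "e = (k, nxt n k) \<or> e = (nxt n k, k)" by (auto simp: arcs_alt)
  have fwd: "\<And>k. k < n \<Longrightarrow> (lab D (k, nxt n k) \<noteq> lab D' (k, nxt n k)) = (AA n D (nxt n k) \<noteq> AA n D' (nxt n k))"
    by (simp add: lab_fwd)
  have bwd: "\<And>k. k < n \<Longrightarrow> (lab D (nxt n k, k) \<noteq> lab D' (nxt n k, k)) = (BB n D k \<noteq> BB n D' k)"
    by (simp add: lab_bwd)
  define X where "X = {e \<in> arcs n. lab D e \<noteq> lab D' e}"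
  have Xmem: "x \<in> X \<longleftrightarrow> (\<exists>k<n. (x = (k, nxt n k) \<and> AA n D (nxt n k) \<noteq> AA n D' (nxt n k)) \<or>
                                   (x = (nxt n k, k) \<and> BB n D k \<noteq> BB n D' k))" for x
    unfolding X_def arcs_alt using fwd bwd by blast
  from k e(2) have "(\<exists>i<n. AA n D i \<noteq> AA n D' i) \<or> (\<exists>i<n. BB n D i \<noteq> BB n D' i)"
    using fwd bwd nxt_lt by metis
  then have "\<exists>x. X = {x}"
  proof
    assume "\<exists>i<n. AA n D i \<noteq> AA n D' i"
    then obtain i where i: "i < n" "AA n D i \<noteq> AA n D' i" by blast
    have all: "\<forall>c<n. (c \<noteq> i \<longrightarrow> AA n D c = AA n D' c) \<and> BB n D c = BB n D' c"
    proof (cases "AA n D i")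
      case True then show ?thesis using core_sched[OF n S S' eq i(1)] i by simp
    next
      case False
      then have "\<forall>c<n. (c \<noteq> i \<longrightarrow> AA n D' c = AA n D c) \<and> BB n D' c = BB n D c"
        using core_sched[OF n S' S eq[symmetric] i(1)] i by simp
      then show ?thesis by auto
    qed
    have "X = {(prv n i, i)}"
    proof (rule set_eqI)
      fix x
      show "x \<in> X \<longleftrightarrow> x \<in> {(prv n i, i)}"
      proof
        assume "x \<in> X"
        then obtain k where k: "k < n" "(x = (k, nxt n k) \<and> AA n D (nxt n k) \<noteq> AA n D' (nxt n k)) \<or>
                                   (x = (nxt n k, k) \<and> BB n D k \<noteq> BB n D' k)" using Xmem by blast
        then have "x = (k, nxt n k)" "nxt n k = i" using all nxt_lt[OF k(1)] by metis+
        then show "x \<in> {(prv n i, i)}" using prv_nxt[OF k(1)] by auto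
      next
        assume "x \<in> {(prv n i, i)}"
        then have "x = (prv n i, nxt n (prv n i))" using nxt_prv[OF i(1)] by simp
        then show "x \<in> X" using Xmem prv_lt[OF i(1)] nxt_prv[OF i(1)] i(2) by metis
      qed
    qed
    then show ?thesis by blast
  next
    assume "\<exists>i<n. BB n D i \<noteq> BB n D' i"
    then obtain i where i: "i < n" "BB n D i \<noteq> BB n D' i" by blast
    have all: "\<forall>c<n. (c \<noteq> i \<longrightarrow> BB n D c = BB n D' c) \<and> AA n D c = AA n D' c"
    proof (cases "BB n D i")
      case True then show ?thesis using core_sched_B[OF n S S' eq i(1)] i by simp
    next
      case False
      then have "\<forall>c<n. (c \<noteq> i \<longrightarrow> BB n D' c = BB n D c) \<and> AA n D' c = AA n D c"
        using core_sched_B[OF n S' S eq[symmetric] i(1)] i by simp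
      then show ?thesis by auto
    qed
    have "X = {(nxt n i, i)}"
    proof (rule set_eqI)
      fix x
      show "x \<in> X \<longleftrightarrow> x \<in> {(nxt n i, i)}"
      proof
        assume "x \<in> X"
        then obtain k where k: "k < n" "(x = (k, nxt n k) \<and> AA n D (nxt n k) \<noteq> AA n D' (nxt n k)) \<or>
                                   (x = (nxt n k, k) \<and> BB n D k \<noteq> BB n D' k)" using Xmem by blast
        then have "x = (nxt n k, k)" "k = i" using all nxt_lt[OF k(1)] by metis+
        then show "x \<in> {(nxt n i, i)}" by auto
      next
        assume "x \<in> {(nxt n i, i)}"
        then show "x \<in> X" using Xmem i by auto
      qed
    qed
    then show ?thesis by blast
  qed
  then show ?thesis unfolding X_def by auto
qed

end
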